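(* The region $\Phi_{B_b}$ is contiguous along both the $p_1$ and $p_2$ dimensions; $\Phi_{B_1}$ is contiguous along the $p_1$ dimension; and $\Phi_{B_2}$ is contiguous along the $p_2$ dimension.
   Context: Fix parameters $0\le\lambda_0\le\lambda_1\le 1$, a discount factor $\beta\in[0,1)$, and rates $0<R_l<R_h<2R_l$. Let $\alpha=\lambda_1-\lambda_0$ and $T(p)=\alpha p+\lambda_0$. The model consists of two independent, identical Gilbert–Elliott channels with $\Pr[\text{good}\mid\text{good}]=\lambda_1$ and $\Pr[\text{good}\mid\text{bad}]=\lambda_0$. The belief state is $(p_1,p_2)\in[0,1]^2$, and there are three actions, $B_b$, $B_1$ and $B_2$. Let $V:[0,1]^2\to\mathbb R$ be the optimal expected total discounted reward, i.e. the unique bounded function satisfying $V=\max\{V_{B_b},V_{B_1},V_{B_2}\}$, where $V_{B_b}(p_1,p_2)=p_1R_l+p_2R_l+\beta[(1-p_1)(1-p_2)V(\lambda_0,\lambda_0)+p_1(1-p_2)V(\lambda_1,\lambda_0)+(1-p_1)p_2V(\lambda_0,\lambda_1)+p_1p_2V(\lambda_1,\lambda_1)]$, $V_{B_1}(p_1,p_2)=p_1R_h+\beta[(1-p_1)V(\lambda_0,T(p_2))+p_1V(\lambda_1,T(p_2))]$, $V_{B_2}(p_1,p_2)=p_2R_h+\beta[(1-p_2)V(T(p_1),\lambda_0)+p_2V(T(p_1),\lambda_1)]$. For $a\in\{B_b,B_1,B_2\}$, the decision region is $\Phi_a=\{(p_1,p_2)\in[0,1]^2: V(p_1,p_2)=V_a(p_1,p_2)\}$.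 A set $\Phi$ is contiguous along the $p_1$ dimension if $(x_1,p_2)\in\Phi$ and $(x_2,p_2)\in\Phi$ imply $(x,p_2)\in\Phi$ for all $x\in[x_1,x_2]$. Contiguity along the $p_2$ dimension is defined analogously. *)

theory Defs
  imports Complex_Main
begin

text \<open>Belief update T(p) = alpha p + lambda0 with alpha = lambda1 - lambda0.\<close>
definition T :: "real \<Rightarrow> real \<Rightarrow> real \<Rightarrow> real" where
  "T l0 l1 p = (l1 - l0) * p + l0"

definition V_Bb :: "real \<Rightarrow> real \<Rightarrow> real \<Rightarrow> real \<Rightarrow> (real \<Rightarrow> real \<Rightarrow> real) \<Rightarrow> real \<Rightarrow> real \<Rightarrow> real" where
  "V_Bb l0 l1 \<beta> Rl V p1 p2 =
     p1 * Rl + p2 * Rl + \<beta> * ((1 - p1) * (1 - p2) * V l0 l0 + p1 * (1 - p2) * V l1 l0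
        + (1 - p1) * p2 * V l0 l1 + p1 * p2 * V l1 l1)"

definition V_B1 :: "real \<Rightarrow> real \<Rightarrow> real \<Rightarrow> real \<Rightarrow> (real \<Rightarrow> real \<Rightarrow> real) \<Rightarrow> real \<Rightarrow> real \<Rightarrow> real" where
  "V_B1 l0 l1 \<beta> Rh V p1 p2 =
     p1 * Rh + \<beta> * ((1 - p1) * V l0 (T l0 l1 p2) + p1 * V l1 (T l0 l1 p2))"

definition V_B2 :: "real \<Rightarrow> real \<Rightarrow> real \<Rightarrow> real \<Rightarrow> (real \<Rightarrow> real \<Rightarrow> real) \<Rightarrow> real \<Rightarrow> real \<Rightarrow> real" where
  "V_B2 l0 l1 \<beta> Rh V p1 p2 =
     p2 * Rh + \<beta> * ((1 - p2) * V (T l0 l1 p1) l0 + p2 * V (T l0 l1 p1) l1)"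

definition bellman_solution :: "real \<Rightarrow> real \<Rightarrow> real \<Rightarrow> real \<Rightarrow> real \<Rightarrow> (real \<Rightarrow> real \<Rightarrow> real) \<Rightarrow> bool" where
  "bellman_solution l0 l1 \<beta> Rl Rh V \<longleftrightarrow>
     (\<exists>M. \<forall>p1\<in>{0..1}. \<forall>p2\<in>{0..1}. \<bar>V p1 p2\<bar> \<le> M) \<and>
     (\<forall>p1\<in>{0..1}. \<forall>p2\<in>{0..1}.
        V p1 p2 = max (V_Bb l0 l1 \<beta> Rl V p1 p2) (max (V_B1 l0 l1 \<beta> Rh V p1 p2) (V_B2 l0 l1 \<beta> Rh V p1 p2)))"

definition region :: "(real \<Rightarrow> real \<Rightarrow> real) \<Rightarrow> (real \<Rightarrow> real \<Rightarrow> real) \<Rightarrow> (real \<times> real) set" where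
  "region V Va = {(p1, p2). p1 \<in> {0..1} \<and> p2 \<in> {0..1} \<and> V p1 p2 = Va p1 p2}"

definition contiguous_p1 :: "(real \<times> real) set \<Rightarrow> bool" where
  "contiguous_p1 S \<longleftrightarrow> (\<forall>x1 x2 p2 x. (x1, p2) \<in> S \<longrightarrow> (x2, p2) \<in> S \<longrightarrow> x1 \<le> x \<longrightarrow> x \<le> x2 \<longrightarrow> (x, p2) \<in> S)"

definition contiguous_p2 :: "(real \<times> real) set \<Rightarrow> bool" where
  "contiguous_p2 S \<longleftrightarrow> (\<forall>y1 y2 p1 y. (p1, y1) \<in> S \<longrightarrow> (p1, y2) \<in> S \<longrightarrow> y1 \<le> y \<longrightarrow> y \<le> y2 \<longrightarrow> (p1, y) \<in> S)"

end

theory Submission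
  imports Defs
begin

definition cvx1 :: "(real \<Rightarrow> real \<Rightarrow> real) \<Rightarrow> bool" where
  "cvx1 W \<longleftrightarrow> (\<forall>y\<in>{0..1}. \<forall>a\<in>{0..1}. \<forall>b\<in>{0..1}. \<forall>t\<in>{0..1}.
      W ((1-t)*a+t*b) y \<le> (1-t)*W a y + t*W b y)"

definition cvx2 :: "(real \<Rightarrow> real \<Rightarrow> real) \<Rightarrow> bool" where
  "cvx2 W \<longleftrightarrow> (\<forall>y\<in>{0..1}. \<forall>a\<in>{0..1}. \<forall>b\<in>{0..1}. \<forall>t\<in>{0..1}.
      W y ((1-t)*a+t*b) \<le> (1-t)*W y a + t*W y b)"

lemma wsum4:
  fixes w1 w2 w3 w4 d1 d2 d3 d4 e :: real
  assumes "w1 \<ge> 0" "w2 \<ge> 0" "w3 \<ge> 0" "w4 \<ge> 0"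
    "\<bar>d1\<bar> \<le> e" "\<bar>d2\<bar> \<le> e" "\<bar>d3\<bar> \<le> e" "\<bar>d4\<bar> \<le> e"
  shows "\<bar>w1*d1 + w2*d2 + w3*d3 + w4*d4\<bar> \<le> (w1+w2+w3+w4)*e"
proof -
  have "\<bar>w1*d1\<bar> \<le> w1*e" using assms by (simp add: abs_mult mult_left_mono)
  moreover have "\<bar>w2*d2\<bar> \<le> w2*e" using assms by (simp add: abs_mult mult_left_mono)
  moreover have "\<bar>w3*d3\<bar> \<le> w3*e" using assms by (simp add: abs_mult mult_left_mono)
  moreover have "\<bar>w4*d4\<bar> \<le> w4*e" using assms by (simp add: abs_mult mult_left_mono)
  ultimately show ?thesis by (simp add: algebra_simps abs_triangle_ineq)
qed

lemma key:
  fixes t fa fb fc ga gb gc :: real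
  assumes "0 \<le> t" "t \<le> 1" "fc \<ge> (1-t)*fa + t*fb" "gc \<le> (1-t)*ga + t*gb" "ga \<le> fa" "gb \<le> fb"
  shows "gc \<le> fc"
proof -
  have "(1-t)*ga \<le> (1-t)*fa" using assms by (intro mult_left_mono) auto
  moreover have "t*gb \<le> t*fb" using assms by (intro mult_left_mono) auto
  ultimately show ?thesis using assms by linarith
qed

lemma seg:
  fixes x1 x x2 :: real
  assumes "x1 \<le> x" "x \<le> x2"
  obtains t where "0 \<le> t" "t \<le> 1" "x = (1-t)*x1 + t*x2"
proof (cases "x1 = x2")
  case True
  then show ?thesis using that[of 0] assms by auto
next
  case False
  then have d: "x2 - x1 > 0" using assms by auto
  define t where "t = (x - x1)/(x2 - x1)"
  have t01: "0 \<le> t" "t \<le> 1" using assms d by (auto simp: t_def field_simps)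
  have "t*(x2-x1) = x - x1" using d by (simp add: t_def)
  then have "x = (1-t)*x1 + t*x2" by (simp add: algebra_simps)
  then show ?thesis using that t01 by blast
qed


lemma gen_contig:
  fixes v f g h :: "real \<Rightarrow> real"
  assumes vf: "\<And>z. z\<in>{0..1} \<Longrightarrow> v z = f z \<longleftrightarrow> (g z \<le> f z \<and> h z \<le> f z)"
    and f: "\<And>a b t. a\<in>{0..1} \<Longrightarrow> b\<in>{0..1} \<Longrightarrow> t\<in>{0..1} \<Longrightarrow> f((1-t)*a+t*b) \<ge> (1-t)*f a + t*f b"
    and g: "\<And>a b t. a\<in>{0..1} \<Longrightarrow> b\<in>{0..1} \<Longrightarrow> t\<in>{0..1} \<Longrightarrow> g((1-t)*a+t*b) \<le> (1-t)*g a + t*g b"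
    and h: "\<And>a b t. a\<in>{0..1} \<Longrightarrow> b\<in>{0..1} \<Longrightarrow> t\<in>{0..1} \<Longrightarrow> h((1-t)*a+t*b) \<le> (1-t)*h a + t*h b"
    and x12: "x1\<in>{0..1}" "x2\<in>{0..1}" "v x1 = f x1" "v x2 = f x2" "x1 \<le> x" "x \<le> x2"
  shows "x\<in>{0..1} \<and> v x = f x"
proof -
  obtain t where t: "0 \<le> t" "t \<le> 1" "x = (1-t)*x1 + t*x2" using seg[OF x12(5,6)] by blast
  have x: "x \<in> {0..1}" using x12 by auto
  have e1: "g x1 \<le> f x1" "h x1 \<le> f x1" using vf[OF x12(1)] x12(3) by auto
  have e2: "g x2 \<le> f x2" "h x2 \<le> f x2" using vf[OF x12(2)] x12(4) by auto
  have t01: "t \<in> {0..1}" using t by auto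
  have "g x \<le> f x"
    using key[OF t(1,2) f[OF x12(1,2) t01] g[OF x12(1,2) t01] e1(1) e2(1)] t(3) by simp
  moreover have "h x \<le> f x"
    using key[OF t(1,2) f[OF x12(1,2) t01] h[OF x12(1,2) t01] e1(2) e2(2)] t(3) by simp
  ultimately show ?thesis using vf[OF x] x by auto
qed

context
  fixes l0 l1 \<beta> Rl Rh :: real
  assumes l: "0 \<le> l0" "l0 \<le> l1" "l1 \<le> 1" and bt: "0 \<le> \<beta>" "\<beta> < 1"
begin

lemma T_aff: "T l0 l1 ((1-t)*a+t*b) = (1-t)*T l0 l1 a + t*T l0 l1 b"
  unfolding T_def by algebra

lemma T_range: "p \<in> {0..1} \<Longrightarrow> T l0 l1 p \<in> {0..1}"
proof -
  assume p: "p \<in> {0..1}"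
  have "(l1 - l0)*p \<ge> 0" using p l by auto
  moreover have "(l1 - l0)*p \<le> (l1 - l0)*1" using p l by (intro mult_left_mono) auto
  ultimately show ?thesis using l unfolding T_def by auto
qed

lemma l0r: "l0 \<in> {0..1}" and l1r: "l1 \<in> {0..1}" using l by auto

lemma Bb_aff1: "V_Bb l0 l1 \<beta> Rl W ((1-t)*a+t*b) y = (1-t)*V_Bb l0 l1 \<beta> Rl W a y + t*V_Bb l0 l1 \<beta> Rl W b y"
  unfolding V_Bb_def by algebra
lemma Bb_aff2: "V_Bb l0 l1 \<beta> Rl W y ((1-t)*a+t*b) = (1-t)*V_Bb l0 l1 \<beta> Rl W y a + t*V_Bb l0 l1 \<beta> Rl W y b"
  unfolding V_Bb_def by algebra
lemma B1_aff1: "V_B1 l0 l1 \<beta> Rh W ((1-t)*a+t*b) y = (1-t)*V_B1 l0 l1 \<beta> Rh W a y + t*V_B1 l0 l1 \<beta> Rh W b y"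
  unfolding V_B1_def by algebra
lemma B2_aff2: "V_B2 l0 l1 \<beta> Rh W y ((1-t)*a+t*b) = (1-t)*V_B2 l0 l1 \<beta> Rh W y a + t*V_B2 l0 l1 \<beta> Rh W y b"
  unfolding V_B2_def by algebra

lemma B2_cvx1:
  assumes "cvx1 W" "y \<in> {0..1}" "a \<in> {0..1}" "b \<in> {0..1}" "t \<in> {0..1}"
  shows "V_B2 l0 l1 \<beta> Rh W ((1-t)*a+t*b) y \<le> (1-t)*V_B2 l0 l1 \<beta> Rh W a y + t*V_B2 l0 l1 \<beta> Rh W b y"
proof -
  let ?Ta = "T l0 l1 a" and ?Tb = "T l0 l1 b"
  have h0: "W ((1-t)*?Ta+t*?Tb) l0 \<le> (1-t)*W ?Ta l0 + t*W ?Tb l0"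
    using assms(1,3-5) T_range l0r unfolding cvx1_def by blast
  have h1: "W ((1-t)*?Ta+t*?Tb) l1 \<le> (1-t)*W ?Ta l1 + t*W ?Tb l1"
    using assms(1,3-5) T_range l1r unfolding cvx1_def by blast
  have "\<beta>*((1-y)*W ((1-t)*?Ta+t*?Tb) l0 + y*W ((1-t)*?Ta+t*?Tb) l1)
      \<le> \<beta>*((1-y)*((1-t)*W ?Ta l0 + t*W ?Tb l0) + y*((1-t)*W ?Ta l1 + t*W ?Tb l1))"
    using assms(2) bt by (intro mult_left_mono add_mono h0 h1) auto
  moreover have "y*Rh + \<beta>*((1-y)*((1-t)*W ?Ta l0 + t*W ?Tb l0) + y*((1-t)*W ?Ta l1 + t*W ?Tb l1))
     = (1-t)*V_B2 l0 l1 \<beta> Rh W a y + t*V_B2 l0 l1 \<beta> Rh W b y"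
    unfolding V_B2_def by algebra
  ultimately show ?thesis unfolding V_B2_def T_aff by linarith
qed

lemma B1_cvx2:
  assumes "cvx2 W" "y \<in> {0..1}" "a \<in> {0..1}" "b \<in> {0..1}" "t \<in> {0..1}"
  shows "V_B1 l0 l1 \<beta> Rh W y ((1-t)*a+t*b) \<le> (1-t)*V_B1 l0 l1 \<beta> Rh W y a + t*V_B1 l0 l1 \<beta> Rh W y b"
proof -
  let ?Ta = "T l0 l1 a" and ?Tb = "T l0 l1 b"
  have h0: "W l0 ((1-t)*?Ta+t*?Tb) \<le> (1-t)*W l0 ?Ta + t*W l0 ?Tb"
    using assms(1,3-5) T_range l0r unfolding cvx2_def by blast
  have h1: "W l1 ((1-t)*?Ta+t*?Tb) \<le> (1-t)*W l1 ?Ta + t*W l1 ?Tb"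
    using assms(1,3-5) T_range l1r unfolding cvx2_def by blast
  have "\<beta>*((1-y)*W l0 ((1-t)*?Ta+t*?Tb) + y*W l1 ((1-t)*?Ta+t*?Tb))
      \<le> \<beta>*((1-y)*((1-t)*W l0 ?Ta + t*W l0 ?Tb) + y*((1-t)*W l1 ?Ta + t*W l1 ?Tb))"
    using assms(2) bt by (intro mult_left_mono add_mono h0 h1) auto
  moreover have "y*Rh + \<beta>*((1-y)*((1-t)*W l0 ?Ta + t*W l0 ?Tb) + y*((1-t)*W l1 ?Ta + t*W l1 ?Tb))
     = (1-t)*V_B1 l0 l1 \<beta> Rh W y a + t*V_B1 l0 l1 \<beta> Rh W y b"
    unfolding V_B1_def by algebra
  ultimately show ?thesis unfolding V_B1_def T_aff by linarith
qed

definition L :: "(real \<Rightarrow> real \<Rightarrow> real) \<Rightarrow> real \<Rightarrow> real \<Rightarrow> real" where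
  "L W x y = max (V_Bb l0 l1 \<beta> Rl W x y) (max (V_B1 l0 l1 \<beta> Rh W x y) (V_B2 l0 l1 \<beta> Rh W x y))"

lemma max3_cvx:
  fixes t f1 f2 f3 a1 a2 a3 b1 b2 b3 :: real
  assumes "0 \<le> t" "t \<le> 1" "f1 \<le> (1-t)*a1+t*b1" "f2 \<le> (1-t)*a2+t*b2" "f3 \<le> (1-t)*a3+t*b3"
  shows "max f1 (max f2 f3) \<le> (1-t)*max a1 (max a2 a3) + t*max b1 (max b2 b3)"
proof -
  have A: "(1-t)*ai \<le> (1-t)*max a1 (max a2 a3)" if "ai \<in> {a1,a2,a3}" for ai
    using assms that by (intro mult_left_mono) auto
  have B: "t*bi \<le> t*max b1 (max b2 b3)" if "bi \<in> {b1,b2,b3}" for bi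
    using assms that by (intro mult_left_mono) auto
  show ?thesis using A[of a1] A[of a2] A[of a3] B[of b1] B[of b2] B[of b3] assms by auto
qed

lemma L_cvx1: assumes "cvx1 W" shows "cvx1 (L W)"
  unfolding cvx1_def L_def
proof (intro ballI)
  fix y a b t :: real assume h: "y \<in> {0..1}" "a \<in> {0..1}" "b \<in> {0..1}" "t \<in> {0..1}"
  show "max (V_Bb l0 l1 \<beta> Rl W ((1 - t) * a + t * b) y)
          (max (V_B1 l0 l1 \<beta> Rh W ((1 - t) * a + t * b) y) (V_B2 l0 l1 \<beta> Rh W ((1 - t) * a + t * b) y))
         \<le> (1 - t) * max (V_Bb l0 l1 \<beta> Rl W a y) (max (V_B1 l0 l1 \<beta> Rh W a y) (V_B2 l0 l1 \<beta> Rh W a y)) +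
            t * max (V_Bb l0 l1 \<beta> Rl W b y) (max (V_B1 l0 l1 \<beta> Rh W b y) (V_B2 l0 l1 \<beta> Rh W b y))"
    using h by (intro max3_cvx B2_cvx1 assms) (auto simp: Bb_aff1 B1_aff1)
qed

lemma L_cvx2: assumes "cvx2 W" shows "cvx2 (L W)"
  unfolding cvx2_def L_def
proof (intro ballI)
  fix y a b t :: real assume h: "y \<in> {0..1}" "a \<in> {0..1}" "b \<in> {0..1}" "t \<in> {0..1}"
  show "max (V_Bb l0 l1 \<beta> Rl W y ((1 - t) * a + t * b))
          (max (V_B1 l0 l1 \<beta> Rh W y ((1 - t) * a + t * b)) (V_B2 l0 l1 \<beta> Rh W y ((1 - t) * a + t * b)))
         \<le> (1 - t) * max (V_Bb l0 l1 \<beta> Rl W y a) (max (V_B1 l0 l1 \<beta> Rh W y a) (V_B2 l0 l1 \<beta> Rh W y a)) +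
            t * max (V_Bb l0 l1 \<beta> Rl W y b) (max (V_B1 l0 l1 \<beta> Rh W y b) (V_B2 l0 l1 \<beta> Rh W y b))"
    using h by (intro max3_cvx B1_cvx2 assms) (auto simp: Bb_aff2 B2_aff2)
qed


lemma max3_lip:
  fixes a1 a2 a3 b1 b2 b3 m :: real
  assumes "\<bar>a1-b1\<bar> \<le> m" "\<bar>a2-b2\<bar> \<le> m" "\<bar>a3-b3\<bar> \<le> m"
  shows "\<bar>max a1 (max a2 a3) - max b1 (max b2 b3)\<bar> \<le> m"
  using assms unfolding max_def abs_le_iff by auto

lemma L_contr:
  assumes W: "\<forall>x\<in>{0..1}. \<forall>y\<in>{0..1}. \<bar>W x y - W' x y\<bar> \<le> e" and x: "x\<in>{0..1}" and y: "y\<in>{0..1}"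
  shows "\<bar>L W x y - L W' x y\<bar> \<le> \<beta>*e"
proof -
  let ?Ty = "T l0 l1 y" and ?Tx = "T l0 l1 x"
  have Ty: "?Ty \<in> {0..1}" and Tx: "?Tx \<in> {0..1}" using T_range x y by auto
  note d = W[rule_format]
  have dd: "\<bar>W l0 l0 - W' l0 l0\<bar> \<le> e" "\<bar>W l1 l0 - W' l1 l0\<bar> \<le> e"
     "\<bar>W l0 l1 - W' l0 l1\<bar> \<le> e" "\<bar>W l1 l1 - W' l1 l1\<bar> \<le> e"
     "\<bar>W l0 ?Ty - W' l0 ?Ty\<bar> \<le> e" "\<bar>W l1 ?Ty - W' l1 ?Ty\<bar> \<le> e"
     "\<bar>W ?Tx l0 - W' ?Tx l0\<bar> \<le> e" "\<bar>W ?Tx l1 - W' ?Tx l1\<bar> \<le> e"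
    using d l0r l1r Tx Ty by auto
  have z: "\<bar>0::real\<bar> \<le> e" using dd(1) by linarith
  have x0: "0 \<le> x" "x \<le> 1" and y0: "0 \<le> y" "y \<le> 1" using x y by auto
  have e1: "\<bar>V_Bb l0 l1 \<beta> Rl W x y - V_Bb l0 l1 \<beta> Rl W' x y\<bar> \<le> \<beta>*e"
  proof -
    have "V_Bb l0 l1 \<beta> Rl W x y - V_Bb l0 l1 \<beta> Rl W' x y = \<beta>*((1-x)*(1-y)*(W l0 l0 - W' l0 l0)
      + x*(1-y)*(W l1 l0 - W' l1 l0) + (1-x)*y*(W l0 l1 - W' l0 l1) + x*y*(W l1 l1 - W' l1 l1))"
      unfolding V_Bb_def by algebra
    moreover have "\<bar>(1-x)*(1-y)*(W l0 l0 - W' l0 l0)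
      + x*(1-y)*(W l1 l0 - W' l1 l0) + (1-x)*y*(W l0 l1 - W' l0 l1) + x*y*(W l1 l1 - W' l1 l1)\<bar>
      \<le> ((1-x)*(1-y) + x*(1-y) + (1-x)*y + x*y)*e"
      using x0 y0 by (intro wsum4 dd) auto
    moreover have "(1-x)*(1-y) + x*(1-y) + (1-x)*y + x*y = 1" by algebra
    ultimately show ?thesis using bt by (simp add: abs_mult mult_left_mono)
  qed
  have e2: "\<bar>V_B1 l0 l1 \<beta> Rh W x y - V_B1 l0 l1 \<beta> Rh W' x y\<bar> \<le> \<beta>*e"
  proof -
    have "V_B1 l0 l1 \<beta> Rh W x y - V_B1 l0 l1 \<beta> Rh W' x y = \<beta>*((1-x)*(W l0 ?Ty - W' l0 ?Ty)
      + x*(W l1 ?Ty - W' l1 ?Ty) + 0*0 + 0*0)"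
      unfolding V_B1_def by algebra
    moreover have "\<bar>(1-x)*(W l0 ?Ty - W' l0 ?Ty) + x*(W l1 ?Ty - W' l1 ?Ty) + 0*0 + 0*0\<bar>
      \<le> ((1-x) + x + 0 + 0)*e"
      using x0 by (intro wsum4 dd z) auto
    ultimately show ?thesis using bt by (simp add: abs_mult mult_left_mono)
  qed
  have e3: "\<bar>V_B2 l0 l1 \<beta> Rh W x y - V_B2 l0 l1 \<beta> Rh W' x y\<bar> \<le> \<beta>*e"
  proof -
    have "V_B2 l0 l1 \<beta> Rh W x y - V_B2 l0 l1 \<beta> Rh W' x y = \<beta>*((1-y)*(W ?Tx l0 - W' ?Tx l0)
      + y*(W ?Tx l1 - W' ?Tx l1) + 0*0 + 0*0)"
      unfolding V_B2_def by algebra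
    moreover have "\<bar>(1-y)*(W ?Tx l0 - W' ?Tx l0) + y*(W ?Tx l1 - W' ?Tx l1) + 0*0 + 0*0\<bar>
      \<le> ((1-y) + y + 0 + 0)*e"
      using y0 by (intro wsum4 dd z) auto
    ultimately show ?thesis using bt by (simp add: abs_mult mult_left_mono)
  qed
  show ?thesis unfolding L_def by (rule max3_lip[OF e1 e2 e3])
qed

fun it :: "nat \<Rightarrow> real \<Rightarrow> real \<Rightarrow> real" where
  "it 0 = (\<lambda>x y. 0)"
| "it (Suc n) = L (it n)"

lemma it_cvx: "cvx1 (it n) \<and> cvx2 (it n)"
proof (induction n)
  case 0 then show ?case by (simp add: cvx1_def cvx2_def)
next
  case (Suc n) then show ?case by (simp add: L_cvx1 L_cvx2)
qed

lemma conv01: "a \<in> {0..1} \<Longrightarrow> b \<in> {0..1} \<Longrightarrow> t \<in> {0..1} \<Longrightarrow> (1-t)*a+t*b \<in> {0..1::real}"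
proof -
  assume h: "a \<in> {0..1}" "b \<in> {0..1}" "t \<in> {0..1}"
  have "(1-t)*a \<le> (1-t)*1" "t*b \<le> t*1" using h by (intro mult_left_mono; auto)+
  moreover have "(1-t)*a \<ge> 0" "t*b \<ge> 0" using h by auto
  ultimately show ?thesis by auto
qed

context
  fixes V :: "real \<Rightarrow> real \<Rightarrow> real"
  assumes bs: "bellman_solution l0 l1 \<beta> Rl Rh V"
begin

lemma Vfix: "x \<in> {0..1} \<Longrightarrow> y \<in> {0..1} \<Longrightarrow> V x y = L V x y"
  using bs unfolding bellman_solution_def L_def by auto

lemma V_approx:
  obtains M where "M \<ge> 0" "\<And>n x y. x \<in> {0..1} \<Longrightarrow> y \<in> {0..1} \<Longrightarrow> \<bar>V x y - it n x y\<bar> \<le> \<beta>^n*M"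
proof -
  obtain M where M: "\<forall>p1\<in>{0..1}. \<forall>p2\<in>{0..1}. \<bar>V p1 p2\<bar> \<le> M"
    using bs unfolding bellman_solution_def by auto
  have M0: "M \<ge> 0" using M by (meson abs_ge_zero atLeastAtMost_iff order_trans zero_le_one order_refl)
  have "\<forall>x\<in>{0..1}. \<forall>y\<in>{0..1}. \<bar>V x y - it n x y\<bar> \<le> \<beta>^n*M" for n
  proof (induction n)
    case 0 then show ?case using M by simp
  next
    case (Suc n)
    show ?case
    proof (intro ballI)
      fix x y :: real assume xy: "x \<in> {0..1}" "y \<in> {0..1}"
      have "\<bar>L V x y - L (it n) x y\<bar> \<le> \<beta>*(\<beta>^n*M)" by (rule L_contr[OF Suc xy])
      then show "\<bar>V x y - it (Suc n) x y\<bar> \<le> \<beta>^Suc n*M" using Vfix[OF xy] by simp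
    qed
  qed
  then show ?thesis using that M0 by blast
qed

lemma lim_le:
  fixes A C M :: real
  assumes "M \<ge> 0" "\<And>n. A \<le> C + 2*(\<beta>^n*M)"
  shows "A \<le> C"
proof -
  have "(\<lambda>n. \<beta>^n) \<longlonglongrightarrow> 0" using bt by (intro LIMSEQ_power_zero) auto
  then have "(\<lambda>n. C + 2*(\<beta>^n*M)) \<longlonglongrightarrow> C + 2*(0*M)"
    by (intro tendsto_add[OF tendsto_const] tendsto_mult[OF tendsto_const] tendsto_mult[OF _ tendsto_const])
  then have "A \<le> C + 2*(0*M)" by (rule LIMSEQ_le_const) (use assms in auto)
  then show ?thesis by simp
qed

lemma comb_bound:
  fixes vc va vb ic ia ib t e :: real
  assumes "\<bar>vc - ic\<bar> \<le> e" "\<bar>va - ia\<bar> \<le> e" "\<bar>vb - ib\<bar> \<le> e" "ic \<le> (1-t)*ia + t*ib" "0 \<le> t" "t \<le> 1"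
  shows "vc \<le> (1-t)*va + t*vb + 2*e"
proof -
  have "(1-t)*ia \<le> (1-t)*(va+e)" using assms by (intro mult_left_mono) auto
  moreover have "t*ib \<le> t*(vb+e)" using assms by (intro mult_left_mono) auto
  moreover have "(1-t)*(va+e) + t*(vb+e) = (1-t)*va + t*vb + e" by algebra
  ultimately show ?thesis using assms by linarith
qed

lemma V_cvx: "cvx1 V \<and> cvx2 V"
proof -
  obtain M where M0: "M \<ge> 0" and Mb: "\<And>n x y. x \<in> {0..1} \<Longrightarrow> y \<in> {0..1} \<Longrightarrow> \<bar>V x y - it n x y\<bar> \<le> \<beta>^n*M"
    using V_approx by blast
  have c1: "cvx1 V" unfolding cvx1_def
  proof (intro ballI)
    fix y a b t :: real assume h: "y \<in> {0..1}" "a \<in> {0..1}" "b \<in> {0..1}" "t \<in> {0..1}"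
    have c: "(1-t)*a+t*b \<in> {0..1}" using conv01 h by auto
    show "V ((1-t)*a+t*b) y \<le> (1-t)*V a y + t*V b y"
    proof (rule lim_le[OF M0])
      fix n
      have "it n ((1-t)*a+t*b) y \<le> (1-t)*it n a y + t*it n b y"
        using it_cvx[of n] h unfolding cvx1_def by blast
      then show "V ((1-t)*a+t*b) y \<le> (1-t)*V a y + t*V b y + 2*(\<beta>^n*M)"
        using h by (intro comb_bound[OF Mb[OF c h(1)] Mb[OF h(2,1)] Mb[OF h(3,1)]]) auto
    qed
  qed
  have c2: "cvx2 V" unfolding cvx2_def
  proof (intro ballI)
    fix y a b t :: real assume h: "y \<in> {0..1}" "a \<in> {0..1}" "b \<in> {0..1}" "t \<in> {0..1}"
    have c: "(1-t)*a+t*b \<in> {0..1}" using conv01 h by auto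
    show "V y ((1-t)*a+t*b) \<le> (1-t)*V y a + t*V y b"
    proof (rule lim_le[OF M0])
      fix n
      have "it n y ((1-t)*a+t*b) \<le> (1-t)*it n y a + t*it n y b"
        using it_cvx[of n] h unfolding cvx2_def by blast
      then show "V y ((1-t)*a+t*b) \<le> (1-t)*V y a + t*V y b + 2*(\<beta>^n*M)"
        using h by (intro comb_bound[OF Mb[OF h(1) c] Mb[OF h(1,2)] Mb[OF h(1,3)]]) auto
    qed
  qed
  show ?thesis using c1 c2 by blast
qed


lemma Vmax: "x \<in> {0..1} \<Longrightarrow> y \<in> {0..1} \<Longrightarrow> V x y = max (V_Bb l0 l1 \<beta> Rl V x y) (max (V_B1 l0 l1 \<beta> Rh V x y) (V_B2 l0 l1 \<beta> Rh V x y))"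
  using bs unfolding bellman_solution_def by auto

lemma cont_all: "contiguous_p1 (region V (V_Bb l0 l1 \<beta> Rl V)) \<and> contiguous_p2 (region V (V_Bb l0 l1 \<beta> Rl V))
       \<and> contiguous_p1 (region V (V_B1 l0 l1 \<beta> Rh V))
       \<and> contiguous_p2 (region V (V_B2 l0 l1 \<beta> Rh V))"
proof -
  have c1: "cvx1 V" and c2: "cvx2 V" using V_cvx by auto
  have A: "contiguous_p1 (region V (V_Bb l0 l1 \<beta> Rl V))"
    unfolding contiguous_p1_def region_def
  proof (intro allI impI)
    fix x1 x2 p2 x assume h: "(x1, p2) \<in> {(p1, p2). p1 \<in> {0..1} \<and> p2 \<in> {0..1} \<and> V p1 p2 = V_Bb l0 l1 \<beta> Rl V p1 p2}"
      "(x2, p2) \<in> {(p1, p2). p1 \<in> {0..1} \<and> p2 \<in> {0..1} \<and> V p1 p2 = V_Bb l0 l1 \<beta> Rl V p1 p2}" "x1 \<le> x" "x \<le> x2"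
    have p2: "p2 \<in> {0..1}" using h by auto
    have "x\<in>{0..1} \<and> V x p2 = V_Bb l0 l1 \<beta> Rl V x p2"
      apply (rule gen_contig[where g="\<lambda>z. V_B1 l0 l1 \<beta> Rh V z p2" and h="\<lambda>z. V_B2 l0 l1 \<beta> Rh V z p2"])
      using h p2 by (auto simp: Vmax Bb_aff1 B1_aff1 intro: B2_cvx1[OF c1])
    then show "(x, p2) \<in> {(p1, p2). p1 \<in> {0..1} \<and> p2 \<in> {0..1} \<and> V p1 p2 = V_Bb l0 l1 \<beta> Rl V p1 p2}"
      using p2 by auto
  qed
  have B: "contiguous_p2 (region V (V_Bb l0 l1 \<beta> Rl V))"
    unfolding contiguous_p2_def region_def
  proof (intro allI impI)
    fix y1 y2 p1 y assume h: "(p1, y1) \<in> {(p1, p2). p1 \<in> {0..1} \<and> p2 \<in> {0..1} \<and> V p1 p2 = V_Bb l0 l1 \<beta> Rl V p1 p2}"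
      "(p1, y2) \<in> {(p1, p2). p1 \<in> {0..1} \<and> p2 \<in> {0..1} \<and> V p1 p2 = V_Bb l0 l1 \<beta> Rl V p1 p2}" "y1 \<le> y" "y \<le> y2"
    have p1: "p1 \<in> {0..1}" using h by auto
    have "y\<in>{0..1} \<and> V p1 y = V_Bb l0 l1 \<beta> Rl V p1 y"
      apply (rule gen_contig[where g="\<lambda>z. V_B1 l0 l1 \<beta> Rh V p1 z" and h="\<lambda>z. V_B2 l0 l1 \<beta> Rh V p1 z"])
      using h p1 by (auto simp: Vmax Bb_aff2 B2_aff2 intro: B1_cvx2[OF c2])
    then show "(p1, y) \<in> {(p1, p2). p1 \<in> {0..1} \<and> p2 \<in> {0..1} \<and> V p1 p2 = V_Bb l0 l1 \<beta> Rl V p1 p2}"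
      using p1 by auto
  qed
  have C: "contiguous_p1 (region V (V_B1 l0 l1 \<beta> Rh V))"
    unfolding contiguous_p1_def region_def
  proof (intro allI impI)
    fix x1 x2 p2 x assume h: "(x1, p2) \<in> {(p1, p2). p1 \<in> {0..1} \<and> p2 \<in> {0..1} \<and> V p1 p2 = V_B1 l0 l1 \<beta> Rh V p1 p2}"
      "(x2, p2) \<in> {(p1, p2). p1 \<in> {0..1} \<and> p2 \<in> {0..1} \<and> V p1 p2 = V_B1 l0 l1 \<beta> Rh V p1 p2}" "x1 \<le> x" "x \<le> x2"
    have p2: "p2 \<in> {0..1}" using h by auto
    have "x\<in>{0..1} \<and> V x p2 = V_B1 l0 l1 \<beta> Rh V x p2"
      apply (rule gen_contig[where g="\<lambda>z. V_Bb l0 l1 \<beta> Rl V z p2" and h="\<lambda>z. V_B2 l0 l1 \<beta> Rh V z p2"])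
      using h p2 by (auto simp: Vmax Bb_aff1 B1_aff1 intro: B2_cvx1[OF c1])
    then show "(x, p2) \<in> {(p1, p2). p1 \<in> {0..1} \<and> p2 \<in> {0..1} \<and> V p1 p2 = V_B1 l0 l1 \<beta> Rh V p1 p2}"
      using p2 by auto
  qed
  have D: "contiguous_p2 (region V (V_B2 l0 l1 \<beta> Rh V))"
    unfolding contiguous_p2_def region_def
  proof (intro allI impI)
    fix y1 y2 p1 y assume h: "(p1, y1) \<in> {(p1, p2). p1 \<in> {0..1} \<and> p2 \<in> {0..1} \<and> V p1 p2 = V_B2 l0 l1 \<beta> Rh V p1 p2}"
      "(p1, y2) \<in> {(p1, p2). p1 \<in> {0..1} \<and> p2 \<in> {0..1} \<and> V p1 p2 = V_B2 l0 l1 \<beta> Rh V p1 p2}" "y1 \<le> y" "y \<le> y2"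
    have p1: "p1 \<in> {0..1}" using h by auto
    have "y\<in>{0..1} \<and> V p1 y = V_B2 l0 l1 \<beta> Rh V p1 y"
      apply (rule gen_contig[where g="\<lambda>z. V_Bb l0 l1 \<beta> Rl V p1 z" and h="\<lambda>z. V_B1 l0 l1 \<beta> Rh V p1 z"])
      using h p1 by (auto simp: Vmax Bb_aff2 B2_aff2 intro: B1_cvx2[OF c2])
    then show "(p1, y) \<in> {(p1, p2). p1 \<in> {0..1} \<and> p2 \<in> {0..1} \<and> V p1 p2 = V_B2 l0 l1 \<beta> Rh V p1 p2}"
      using p1 by auto
  qed
  show ?thesis using A B C D by blast
qed

end

end

theorem theorem1:
  fixes l0 l1 \<beta> Rl Rh :: real and V :: "real \<Rightarrow> real \<Rightarrow> real"
  assumes "0 \<le> l0" "l0 \<le> l1" "l1 \<le> 1"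
    and "0 \<le> \<beta>" "\<beta> < 1"
    and "0 < Rl" "Rl < Rh" "Rh < 2 * Rl"
    and "bellman_solution l0 l1 \<beta> Rl Rh V"
  shows "contiguous_p1 (region V (V_Bb l0 l1 \<beta> Rl V)) \<and> contiguous_p2 (region V (V_Bb l0 l1 \<beta> Rl V))
       \<and> contiguous_p1 (region V (V_B1 l0 l1 \<beta> Rh V))
       \<and> contiguous_p2 (region V (V_B2 l0 l1 \<beta> Rh V))"
  using cont_all[OF assms(1-5) assms(9)] .

end
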